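(* Let $T$ be a tournament in which every vertex lies in some triangle, and let $w:V(T)\to\mathbb{Q}_{\ge0}$. Suppose there is an optimal solution $x$ of $\min\{\sum_v w(v)x_v : x\in P(T)\}$ with $x_v<1/2$ for all $v\in V(T)$. Then $\mathrm{SA}_0(T,w)=\min\{\sum_v w(v)x_v: x\in P(T)\}=w(V(T))/3$.
   Context: A triangle of a tournament $T$ is a set $\{a,b,c\}\subseteq V(T)$ inducing a directed 3-cycle; $\triangle(T)$ is the set of triangles. The basic relaxation is $P(T)=\{x\in[0,1]^{V(T)}: x_a+x_b+x_c\ge 1\ \forall\{a,b,c\}\in\triangle(T)\}$ and $\mathrm{SA}_0(T,w)=\min\{\sum_v w(v)x_v: x\in P(T)\}$. $w(V(T))=\sum_{v}w(v)$. *)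

theory Defs
  imports Complex_Main
begin

definition tournament :: "'a set \<Rightarrow> ('a \<Rightarrow> 'a \<Rightarrow> bool) \<Rightarrow> bool" where
  "tournament V A \<longleftrightarrow> finite V \<and>
     (\<forall>u v. A u v \<longrightarrow> u \<in> V \<and> v \<in> V) \<and>
     (\<forall>v\<in>V. \<not> A v v) \<and>
     (\<forall>u\<in>V. \<forall>v\<in>V. u \<noteq> v \<longrightarrow> (A u v \<longleftrightarrow> \<not> A v u))"

definition triangles :: "'a set \<Rightarrow> ('a \<Rightarrow> 'a \<Rightarrow> bool) \<Rightarrow> 'a set set" where
  "triangles V A = {{a, b, c} | a b c. a \<in> V \<and> b \<in> V \<and> c \<in> V \<and>
      a \<noteq> b \<and> b \<noteq> c \<and> a \<noteq> c \<and> A a b \<and> A b c \<and> A c a}"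

text \<open>The basic relaxation P(T); only the values on V matter.\<close>
definition PT :: "'a set \<Rightarrow> ('a \<Rightarrow> 'a \<Rightarrow> bool) \<Rightarrow> ('a \<Rightarrow> real) set" where
  "PT V A = {x. (\<forall>v\<in>V. 0 \<le> x v \<and> x v \<le> 1) \<and>
      (\<forall>t\<in>triangles V A. (\<Sum>v\<in>t. x v) \<ge> 1)}"

definition SA0 :: "'a set \<Rightarrow> ('a \<Rightarrow> 'a \<Rightarrow> bool) \<Rightarrow> ('a \<Rightarrow> real) \<Rightarrow> real" where
  "SA0 V A w = Inf ((\<lambda>x. \<Sum>v\<in>V. w v * x v) ` PT V A)"

end

theory Submission
  imports Defs
begin

lemma tri3: "t = {a,b,c} \<Longrightarrow> a \<noteq> b \<Longrightarrow> b \<noteq> c \<Longrightarrow> a \<noteq> c \<Longrightarrow> (\<Sum>v\<in>t. f v) = f a + f b + (f c :: 'b::comm_monoid_add)"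
  by (simp add: add.assoc)

lemma triE: assumes "t \<in> triangles V A"
  obtains a b c where "t = {a,b,c}" "a \<in> V" "b \<in> V" "c \<in> V" "a \<noteq> b" "b \<noteq> c" "a \<noteq> c"
proof -
  from assms have "\<exists>a b c. t = {a,b,c} \<and> a \<in> V \<and> b \<in> V \<and> c \<in> V \<and> a \<noteq> b \<and> b \<noteq> c \<and> a \<noteq> c"
    unfolding triangles_def mem_Collect_eq by metis
  thus ?thesis using that by metis
qed

theorem mainTheorem12:
  fixes V :: "'a set" and A :: "'a \<Rightarrow> 'a \<Rightarrow> bool"
    and w :: "'a \<Rightarrow> real" and x :: "'a \<Rightarrow> real"
  assumes "tournament V A"
    and "\<forall>v\<in>V. \<exists>t\<in>triangles V A. v \<in> t"
    and "\<forall>v\<in>V. w v \<in> \<rat> \<and> w v \<ge> 0"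
    and "x \<in> PT V A"
    and "\<forall>y\<in>PT V A. (\<Sum>v\<in>V. w v * x v) \<le> (\<Sum>v\<in>V. w v * y v)"
    and "\<forall>v\<in>V. x v < 1/2"
  shows "SA0 V A w = (\<Sum>v\<in>V. w v * x v) \<and> SA0 V A w = (\<Sum>v\<in>V. w v) / 3"
proof -
  have fin: "finite V" using assms(1) unfolding tournament_def by blast
  have S1: "SA0 V A w = (\<Sum>v\<in>V. w v * x v)"
    unfolding SA0_def
  proof (rule cInf_eq_minimum)
    show "(\<Sum>v\<in>V. w v * x v) \<in> (\<lambda>x. \<Sum>v\<in>V. w v * x v) ` PT V A"
      using assms(4) by (rule imageI)
    fix z assume "z \<in> (\<lambda>x. \<Sum>v\<in>V. w v * x v) ` PT V A"
    then obtain y where y: "y \<in> PT V A" "z = (\<Sum>v\<in>V. w v * y v)" by blast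
    have "(\<Sum>v\<in>V. w v * x v) \<le> (\<Sum>v\<in>V. w v * y v)" using assms(5) y(1) by (rule bspec)
    thus "(\<Sum>v\<in>V. w v * x v) \<le> z" using y(2) by simp
  qed
  have pos: "x v > 0" if "v \<in> V" for v
  proof -
    have "\<exists>t\<in>triangles V A. v \<in> t" using assms(2) that by (rule bspec)
    then obtain t where t: "t \<in> triangles V A" "v \<in> t" by (rule bexE)
    obtain a b c where abc: "t = {a,b,c}" "a \<in> V" "b \<in> V" "c \<in> V" "a \<noteq> b" "b \<noteq> c" "a \<noteq> c"
      using triE[OF t(1)] by metis
    have "(\<Sum>v\<in>t. x v) \<ge> 1" using assms(4) t(1) unfolding PT_def by blast
    hence s: "x a + x b + x c \<ge> 1" using tri3[OF abc(1) abc(5-7), where f=x] by simp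
    have "x a < 1/2" "x b < 1/2" "x c < 1/2" using assms(6) abc by auto
    moreover have "v = a \<or> v = b \<or> v = c" using t(2) abc(1) by blast
    ultimately show ?thesis using s by auto
  qed
  show ?thesis
  proof (cases "V = {}")
    case True thus ?thesis using S1 by simp
  next
    case False
    define e where "e = min 1 (Min (x ` V))"
    have e1: "e \<le> 1" "0 < e" using pos fin False by (auto simp: e_def)
    have e2: "e \<le> x v" if "v \<in> V" for v using fin that unfolding e_def
      by (metis Min_le finite_imageI image_eqI min.coboundedI2)
    define y where "y = (\<lambda>v. (1+e) * x v - e/3)"
    have yP: "y \<in> PT V A"
      unfolding PT_def
    proof (intro CollectI conjI ballI)
      fix v assume v: "v \<in> V"
      have "x v \<ge> e" "x v < 1/2" "x v > 0" using e2 v assms(6) pos v by auto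
      have "e * x v \<ge> 0" "e * x v \<le> 1 * (1/2)" using e1 \<open>x v > 0\<close> \<open>x v < 1/2\<close>
        by (simp, intro mult_mono, auto)
      moreover have "y v = x v + e * x v - e/3" by (simp add: y_def algebra_simps)
      ultimately show "0 \<le> y v" "y v \<le> 1" using e1 \<open>x v \<ge> e\<close> \<open>x v < 1/2\<close> \<open>y v = x v + e * x v - e/3\<close>
        by linarith+
    next
      fix t assume t: "t \<in> triangles V A"
      obtain a b c where abc: "t = {a,b,c}" "a \<noteq> b" "b \<noteq> c" "a \<noteq> c"
        using triE[OF t] by metis
      have "(\<Sum>v\<in>t. x v) \<ge> 1" using assms(4) t unfolding PT_def by blast
      hence s: "x a + x b + x c \<ge> 1" using tri3[OF abc, where f=x] by simp
      have "y a + y b + y c = (1+e) * (x a + x b + x c) - e" unfolding y_def by (simp add: algebra_simps)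
      also have "\<dots> \<ge> 1" proof -
        have "e * (x a + x b + x c) \<ge> e * 1" using s e1 by (intro mult_left_mono) auto
        thus ?thesis using s by (simp add: algebra_simps)
      qed
      finally show "(\<Sum>v\<in>t. y v) \<ge> 1" using tri3[OF abc, where f=y] by simp
    qed
    have "(\<Sum>v\<in>V. w v * y v) = (1+e) * (\<Sum>v\<in>V. w v * x v) - e/3 * (\<Sum>v\<in>V. w v)"
    proof -
      have "(\<Sum>v\<in>V. w v * y v) = (\<Sum>v\<in>V. (1+e) * (w v * x v) - e/3 * w v)"
        unfolding y_def by (rule sum.cong) (simp_all add: algebra_simps)
      also have "\<dots> = (\<Sum>v\<in>V. (1+e) * (w v * x v)) - (\<Sum>v\<in>V. e/3 * w v)"
        by (rule sum_subtractf)
      also have "\<dots> = (1+e) * (\<Sum>v\<in>V. w v * x v) - e/3 * (\<Sum>v\<in>V. w v)"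
        by (simp add: sum_distrib_left)
      finally show ?thesis .
    qed
    moreover have "(\<Sum>v\<in>V. w v * x v) \<le> (\<Sum>v\<in>V. w v * y v)" using assms(5) yP by (rule bspec)
    ultimately have "e * ((\<Sum>v\<in>V. w v * x v) - (\<Sum>v\<in>V. w v)/3) \<ge> 0"
      by (simp add: algebra_simps)
    hence ge: "(\<Sum>v\<in>V. w v * x v) \<ge> (\<Sum>v\<in>V. w v)/3" using e1
      by (simp add: zero_le_mult_iff)
    have "(\<lambda>v. 1/3) \<in> PT V A"
      unfolding PT_def
    proof (intro CollectI conjI ballI)
      fix t assume t: "t \<in> triangles V A"
      obtain a b c where abc: "t = {a,b,c}" "a \<noteq> b" "b \<noteq> c" "a \<noteq> c"
        using triE[OF t] by metis
      show "(\<Sum>v\<in>t. (1/3::real)) \<ge> 1" using tri3[OF abc, where f="\<lambda>_. 1/3::real"] by simp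
    qed auto
    with assms(5) have "(\<Sum>v\<in>V. w v * x v) \<le> (\<Sum>v\<in>V. w v * (1/3))" by (rule bspec)
    also have "\<dots> = (\<Sum>v\<in>V. w v)/3" by (simp add: sum_divide_distrib)
    finally show ?thesis using ge S1 by linarith
  qed
qed

end
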